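(* Let $U$ be a real separable Hilbert space (complexified if necessary), $\Lambda$ a positive self-adjoint operator on $U$ with orthogonal basis of eigenvectors $(e_n)$ and eigenvalues $\mu_n\uparrow+\infty$, $\rho>0$, $\alpha\in[1/2,1)$, $\gamma\in[0,1/2)$, with $\rho^2\ne4\mu_n^{1-2\alpha}$ for all $n$. On $H=U\times U$ let $A=\begin{pmatrix}0&\Lambda^{1/2}\\-\Lambda^{1/2}&-\rho\Lambda^\alpha\end{pmatrix}$, $G=\widetilde G\Lambda^{-\gamma}$ with $\widetilde Gu=(0,u)$. For $n\in\mathbb N$ let $\lambda_n^\pm=\frac{-\rho\mu_n^\alpha\pm\sqrt{\rho^2\mu_n^{2\alpha}-4\mu_n}}2$, $\Phi_n^\pm=(\mu_n^{1/2}e_n,\lambda_n^\pm e_n)$ (eigenvectors of $A$), $H_n=\mathrm{span}\{\Phi_k^+,\Phi_k^-:k\le n\}$, $P_n$ the orthogonal projection onto $H_n$, $A_n$ the restriction of $A$ to $H_n$ and $G_n=P_nG$. Then for every $n$ the control system $Y'(\tau)=A_nY(\tau)+G_nu(\tau)$, $\tau\in(0,t]$, $Y(0)=h\in H_n$, is null-controllable, and for every $t>0$ there exists $\bar c>0$, depending on $\alpha,\gamma,t$ but not on $n$, such that $\mathcal E_{C,n}(t,h)\le \bar c\,\|h\|_H\,t^{-1/2-(\gamma+\alpha-1/2)/(1-\alpha)}$ for all $h\in H_n$.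
   Context: For $u\in L^2(0,t;U)$ the (mild) solution is $Y(\tau)=e^{\tau A_n}h+\int_0^\tau e^{(\tau-s)A_n}G_nu(s)ds$. Null-controllable means: for every $t>0$ and $h\in H_n$ there is $u\in L^2(0,t;U)$ with $Y(t)=0$. $\mathcal E_{C,n}(t,h):=\inf\{\|u\|_{L^2(0,t;U)}: Y(t)=0\}$ is the minimal energy to steer $h$ to $0$ at time $t$. *)

theory Defs
  imports "HOL-Analysis.Analysis"
begin

text \<open>U is realised (after complexification) via its orthonormal eigenbasis (e_j):
  an element of U is its coordinate sequence nat => complex, Lambda acts diagonally by mu j.
  An element of H = U x U is the sequence j => (coordinate of first component on e_j,
  coordinate of second component on e_j).\<close>

type_synonym hvec = "nat \<Rightarrow> complex \<times> complex"

definition csc :: "complex \<Rightarrow> complex \<times> complex \<Rightarrow> complex \<times> complex" where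
  "csc c p = (c * fst p, c * snd p)"

definition lam_p :: "(nat \<Rightarrow> real) \<Rightarrow> real \<Rightarrow> real \<Rightarrow> nat \<Rightarrow> complex" where
  "lam_p \<mu> \<rho> \<alpha> k =
     (- complex_of_real (\<rho> * \<mu> k powr \<alpha>)
      + csqrt (complex_of_real (\<rho>\<^sup>2 * \<mu> k powr (2 * \<alpha>) - 4 * \<mu> k))) / 2"

definition lam_m :: "(nat \<Rightarrow> real) \<Rightarrow> real \<Rightarrow> real \<Rightarrow> nat \<Rightarrow> complex" where
  "lam_m \<mu> \<rho> \<alpha> k =
     (- complex_of_real (\<rho> * \<mu> k powr \<alpha>)
      - csqrt (complex_of_real (\<rho>\<^sup>2 * \<mu> k powr (2 * \<alpha>) - 4 * \<mu> k))) / 2"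

definition Phi_p :: "(nat \<Rightarrow> real) \<Rightarrow> real \<Rightarrow> real \<Rightarrow> nat \<Rightarrow> hvec" where
  "Phi_p \<mu> \<rho> \<alpha> k = (\<lambda>j. if j = k then (complex_of_real (sqrt (\<mu> k)), lam_p \<mu> \<rho> \<alpha> k) else (0, 0))"

definition Phi_m :: "(nat \<Rightarrow> real) \<Rightarrow> real \<Rightarrow> real \<Rightarrow> nat \<Rightarrow> hvec" where
  "Phi_m \<mu> \<rho> \<alpha> k = (\<lambda>j. if j = k then (complex_of_real (sqrt (\<mu> k)), lam_m \<mu> \<rho> \<alpha> k) else (0, 0))"

definition Hn :: "(nat \<Rightarrow> real) \<Rightarrow> real \<Rightarrow> real \<Rightarrow> nat \<Rightarrow> hvec set" where
  "Hn \<mu> \<rho> \<alpha> n = {h. \<exists>a b :: nat \<Rightarrow> complex.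
      h = (\<lambda>j. \<Sum>k\<le>n. csc (a k) (Phi_p \<mu> \<rho> \<alpha> k j) + csc (b k) (Phi_m \<mu> \<rho> \<alpha> k j))}"

definition hinner :: "hvec \<Rightarrow> hvec \<Rightarrow> complex" where
  "hinner v w = (\<Sum>j. fst (v j) * cnj (fst (w j)) + snd (v j) * cnj (snd (w j)))"

definition Hnorm :: "hvec \<Rightarrow> real" where
  "Hnorm h = sqrt (\<Sum>j. (cmod (fst (h j)))\<^sup>2 + (cmod (snd (h j)))\<^sup>2)"

definition Pn :: "(nat \<Rightarrow> real) \<Rightarrow> real \<Rightarrow> real \<Rightarrow> nat \<Rightarrow> hvec \<Rightarrow> hvec" where
  "Pn \<mu> \<rho> \<alpha> n v = (THE p. p \<in> Hn \<mu> \<rho> \<alpha> n \<and>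
      (\<forall>w \<in> Hn \<mu> \<rho> \<alpha> n. hinner (\<lambda>j. v j - p j) w = 0))"

definition Aop :: "(nat \<Rightarrow> real) \<Rightarrow> real \<Rightarrow> real \<Rightarrow> hvec \<Rightarrow> hvec" where
  "Aop \<mu> \<rho> \<alpha> h = (\<lambda>j. (complex_of_real (sqrt (\<mu> j)) * snd (h j),
       - complex_of_real (sqrt (\<mu> j)) * fst (h j) - complex_of_real (\<rho> * \<mu> j powr \<alpha>) * snd (h j)))"

definition An :: "(nat \<Rightarrow> real) \<Rightarrow> real \<Rightarrow> real \<Rightarrow> nat \<Rightarrow> hvec \<Rightarrow> hvec" where
  "An \<mu> \<rho> \<alpha> n h = (if h \<in> Hn \<mu> \<rho> \<alpha> n then Aop \<mu> \<rho> \<alpha> h else (\<lambda>j. (0, 0)))"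

definition semi :: "(nat \<Rightarrow> real) \<Rightarrow> real \<Rightarrow> real \<Rightarrow> nat \<Rightarrow> real \<Rightarrow> hvec \<Rightarrow> hvec" where
  "semi \<mu> \<rho> \<alpha> n \<tau> h = (\<lambda>j. \<Sum>i. (\<tau> ^ i / fact i) *\<^sub>R ((An \<mu> \<rho> \<alpha> n ^^ i) h j))"

definition Gop :: "(nat \<Rightarrow> real) \<Rightarrow> real \<Rightarrow> (nat \<Rightarrow> complex) \<Rightarrow> hvec" where
  "Gop \<mu> \<gamma> u = (\<lambda>j. (0, complex_of_real (\<mu> j powr (- \<gamma>)) * u j))"

definition Gn :: "(nat \<Rightarrow> real) \<Rightarrow> real \<Rightarrow> real \<Rightarrow> real \<Rightarrow> nat \<Rightarrow> (nat \<Rightarrow> complex) \<Rightarrow> hvec" where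
  "Gn \<mu> \<rho> \<alpha> \<gamma> n u = Pn \<mu> \<rho> \<alpha> n (Gop \<mu> \<gamma> u)"

definition L2sq :: "real \<Rightarrow> (real \<Rightarrow> nat \<Rightarrow> complex) \<Rightarrow> ennreal" where
  "L2sq t u = (\<integral>\<^sup>+ s. (\<Sum>j. ennreal ((cmod (u s j))\<^sup>2)) * indicator {0..t} s \<partial>lborel)"

definition L2ctrl :: "real \<Rightarrow> (real \<Rightarrow> nat \<Rightarrow> complex) set" where
  "L2ctrl t = {u. (\<forall>j. (\<lambda>s. u s j) \<in> borel_measurable (restrict_space lborel {0..t}))
                  \<and> L2sq t u < \<infinity>}"

definition L2norm :: "real \<Rightarrow> (real \<Rightarrow> nat \<Rightarrow> complex) \<Rightarrow> real" where
  "L2norm t u = sqrt (enn2real (L2sq t u))"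

definition Ysol :: "(nat \<Rightarrow> real) \<Rightarrow> real \<Rightarrow> real \<Rightarrow> real \<Rightarrow> nat \<Rightarrow> hvec
                     \<Rightarrow> (real \<Rightarrow> nat \<Rightarrow> complex) \<Rightarrow> real \<Rightarrow> hvec" where
  "Ysol \<mu> \<rho> \<alpha> \<gamma> n h u \<tau> = (\<lambda>j. semi \<mu> \<rho> \<alpha> n \<tau> h j +
      set_lebesgue_integral lborel {0..\<tau>}
        (\<lambda>s. semi \<mu> \<rho> \<alpha> n (\<tau> - s) (Gn \<mu> \<rho> \<alpha> \<gamma> n (u s)) j))"

definition Energy :: "(nat \<Rightarrow> real) \<Rightarrow> real \<Rightarrow> real \<Rightarrow> real \<Rightarrow> nat \<Rightarrow> real \<Rightarrow> hvec \<Rightarrow> real" where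
  "Energy \<mu> \<rho> \<alpha> \<gamma> n t h =
     Inf (L2norm t ` {u \<in> L2ctrl t. Ysol \<mu> \<rho> \<alpha> \<gamma> n h u t = (\<lambda>j. (0, 0))})"

end

theory Submission
  imports Defs "HOL-Real_Asymp.Real_Asymp"
begin


locale ctl =
  fixes \<mu> :: "nat \<Rightarrow> real" and \<rho> \<alpha> \<gamma> :: real
  assumes mu_pos: "\<And>k. 0 < \<mu> k"
    and rho_pos: "0 < \<rho>"
    and alpha: "1/2 \<le> \<alpha>" "\<alpha> < 1"
    and gamma: "0 \<le> \<gamma>" "\<gamma> < 1/2"
    and nondeg: "\<And>k. \<rho>\<^sup>2 \<noteq> 4 * \<mu> k powr (1 - 2 * \<alpha>)"
begin

abbreviation "lp k \<equiv> lam_p \<mu> \<rho> \<alpha> k"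
abbreviation "lm k \<equiv> lam_m \<mu> \<rho> \<alpha> k"
definition "bb k = \<rho> * \<mu> k powr \<alpha>"
definition "DD k = \<rho>\<^sup>2 * \<mu> k powr (2 * \<alpha>) - 4 * \<mu> k"
definition "dd k = csqrt (complex_of_real (DD k))"
definition "sq k = complex_of_real (sqrt (\<mu> k))"

lemma bb_pos: "0 < bb k" using mu_pos[of k] rho_pos by (simp add: bb_def)

lemma DD_eq: "DD k = (bb k)\<^sup>2 - 4 * \<mu> k"
proof -
  have "\<mu> k powr (2*\<alpha>) = (\<mu> k powr \<alpha>)\<^sup>2"
    using mu_pos[of k] by (simp add: powr_powr[symmetric] power2_eq_square powr_add[symmetric])
  then show ?thesis by (simp add: DD_def bb_def power_mult_distrib)
qed

lemma lp_def': "lp k = (- of_real (bb k) + dd k) / 2"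
  by (simp add: lam_p_def bb_def dd_def DD_def)
lemma lm_def': "lm k = (- of_real (bb k) - dd k) / 2"
  by (simp add: lam_m_def bb_def dd_def DD_def)
lemma dd_eq: "dd k = lp k - lm k"
  by (simp add: lp_def' lm_def' field_simps)

lemma sq_sq: "sq k * sq k = of_real (\<mu> k)"
  using mu_pos[of k] by (simp add: sq_def flip: of_real_mult)

lemma dd_sq: "(dd k)\<^sup>2 = of_real ((bb k)\<^sup>2) - 4 * of_real (\<mu> k)"
  by (simp add: dd_def DD_eq)

lemma dd_sq': "dd k * dd k = of_real (bb k) * of_real (bb k) - 4 * of_real (\<mu> k)"
  using dd_sq[of k] by (simp add: power2_eq_square)

lemma eig_p: "(lp k)\<^sup>2 = - of_real (\<mu> k) - of_real (bb k) * lp k"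
  unfolding lp_def' power2_eq_square by (simp add: field_simps dd_sq')

lemma eig_m: "(lm k)\<^sup>2 = - of_real (\<mu> k) - of_real (bb k) * lm k"
  unfolding lm_def' power2_eq_square by (simp add: field_simps dd_sq')

lemma DD_nz: "DD k \<noteq> 0"
proof
  assume "DD k = 0"
  then have e: "\<rho>\<^sup>2 * \<mu> k powr (2 * \<alpha>) = 4 * \<mu> k" by (simp add: DD_def)
  have "\<mu> k powr (2*\<alpha>) * \<mu> k powr (1 - 2*\<alpha>) = \<mu> k"
    using mu_pos[of k] by (simp add: powr_add[symmetric])
  then have "\<rho>\<^sup>2 * \<mu> k = 4 * \<mu> k powr (1 - 2 * \<alpha>) * \<mu> k"
    using e by (metis mult.assoc mult.commute)
  then have "\<rho>\<^sup>2 = 4 * \<mu> k powr (1 - 2 * \<alpha>)" using mu_pos[of k] by simp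
  with nondeg show False by blast
qed

lemma dd_nz: "dd k \<noteq> 0"
  using DD_nz by (simp add: dd_def)


end


context ctl begin

definition vec :: "nat \<Rightarrow> (nat \<Rightarrow> complex) \<Rightarrow> (nat \<Rightarrow> complex) \<Rightarrow> hvec" where
  "vec n a b = (\<lambda>j. \<Sum>k\<le>n. csc (a k) (Phi_p \<mu> \<rho> \<alpha> k j) + csc (b k) (Phi_m \<mu> \<rho> \<alpha> k j))"

lemma Hn_iff: "h \<in> Hn \<mu> \<rho> \<alpha> n \<longleftrightarrow> (\<exists>a b. h = vec n a b)"
  by (simp add: Hn_def vec_def)

lemma vec_in: "vec n a b \<in> Hn \<mu> \<rho> \<alpha> n"
  using Hn_iff by blast

lemma vec_eq: "vec n a b j = (if j \<le> n then (a j * sq j + b j * sq j, a j * lp j + b j * lm j) else (0, 0))"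
proof -
  have "vec n a b j = (\<Sum>k\<le>n. if j = k then (a j * sq j + b j * sq j, a j * lp j + b j * lm j) else 0)"
    unfolding vec_def by (intro sum.cong) (auto simp: Phi_p_def Phi_m_def csc_def sq_def zero_prod_def)
  also have "\<dots> = (if j \<le> n then (a j * sq j + b j * sq j, a j * lp j + b j * lm j) else (0, 0))"
    by (simp add: zero_prod_def[symmetric])
  finally show ?thesis .
qed

lemma Aop_vec: "Aop \<mu> \<rho> \<alpha> (vec n a b) = vec n (\<lambda>k. lp k * a k) (\<lambda>k. lm k * b k)"
proof
  fix j
  have r: "complex_of_real (\<rho> * \<mu> j powr \<alpha>) = of_real (bb j)" by (simp add: bb_def)
  have ss: "complex_of_real (sqrt (\<mu> j)) = sq j" by (simp add: sq_def)
  show "Aop \<mu> \<rho> \<alpha> (vec n a b) j = vec n (\<lambda>k. lp k * a k) (\<lambda>k. lm k * b k) j"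
  proof (cases "j \<le> n")
    case True
    have "- sq j * (a j * sq j + b j * sq j) - of_real (bb j) * (a j * lp j + b j * lm j)
        = lp j * a j * lp j + lm j * b j * lm j"
    proof -
      have "- sq j * (a j * sq j + b j * sq j) = - (a j + b j) * (sq j * sq j)" by (simp add: algebra_simps)
      also have "\<dots> = - (a j + b j) * of_real (\<mu> j)" by (simp add: sq_sq)
      finally have 1: "- sq j * (a j * sq j + b j * sq j) = - (a j + b j) * of_real (\<mu> j)" .
      have 2: "lp j * a j * lp j = a j * (lp j)\<^sup>2" "lm j * b j * lm j = b j * (lm j)\<^sup>2"
        by (simp_all add: power2_eq_square)
      show ?thesis unfolding 1 2 eig_p eig_m by (simp add: algebra_simps)
    qed
    then show ?thesis using True unfolding Aop_def vec_eq r ss by (simp add: algebra_simps)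
  next
    case False
    then show ?thesis by (simp add: Aop_def vec_eq)
  qed
qed

lemma An_pow_vec: "(An \<mu> \<rho> \<alpha> n ^^ i) (vec n a b) = vec n (\<lambda>k. lp k ^ i * a k) (\<lambda>k. lm k ^ i * b k)"
proof (induction i)
  case 0
  then show ?case by simp
next
  case (Suc i)
  have "(An \<mu> \<rho> \<alpha> n ^^ Suc i) (vec n a b) = An \<mu> \<rho> \<alpha> n ((An \<mu> \<rho> \<alpha> n ^^ i) (vec n a b))"
    by simp
  also have "\<dots> = Aop \<mu> \<rho> \<alpha> (vec n (\<lambda>k. lp k ^ i * a k) (\<lambda>k. lm k ^ i * b k))"
    unfolding Suc An_def using vec_in by simp
  finally show ?case by (simp add: Aop_vec mult.assoc)
qed

lemma sums_Pair: "f sums x \<Longrightarrow> g sums y \<Longrightarrow> (\<lambda>i. (f i, g i)) sums (x, y)"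
proof -
  assume f: "f sums x" and g: "g sums y"
  have e: "(\<Sum>i<m. (f i, g i)) = (\<Sum>i<m. f i, \<Sum>i<m. g i)" for m
    by (induction m) (auto simp: zero_prod_def)
  show ?thesis using tendsto_Pair[OF f[unfolded sums_def] g[unfolded sums_def]]
    unfolding sums_def e .
qed

lemma exp_sums: "(\<lambda>i. (\<tau> ^ i / fact i) *\<^sub>R (c * l ^ i)) sums (c * exp (complex_of_real \<tau> * l))"
proof -
  have "(\<lambda>i. c * ((complex_of_real \<tau> * l) ^ i /\<^sub>R fact i)) sums (c * exp (complex_of_real \<tau> * l))"
    by (intro sums_mult exp_converges)
  moreover have "c * ((complex_of_real \<tau> * l) ^ i /\<^sub>R fact i) = (\<tau> ^ i / fact i) *\<^sub>R (c * l ^ i)" for i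
    by (simp add: scaleR_conv_of_real power_mult_distrib field_simps)
  ultimately show ?thesis by simp
qed

lemma semi_vec: "semi \<mu> \<rho> \<alpha> n \<tau> (vec n a b) =
   vec n (\<lambda>k. exp (complex_of_real \<tau> * lp k) * a k) (\<lambda>k. exp (complex_of_real \<tau> * lm k) * b k)"
proof
  fix j
  show "semi \<mu> \<rho> \<alpha> n \<tau> (vec n a b) j = vec n (\<lambda>k. exp (complex_of_real \<tau> * lp k) * a k) (\<lambda>k. exp (complex_of_real \<tau> * lm k) * b k) j"
  proof (cases "j \<le> n")
    case False
    then show ?thesis by (simp add: semi_def An_pow_vec vec_eq zero_prod_def[symmetric])
  next
    case True
    have "(\<lambda>i. (\<tau> ^ i / fact i) *\<^sub>R ((An \<mu> \<rho> \<alpha> n ^^ i) (vec n a b) j)) =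
      (\<lambda>i. ((\<tau> ^ i / fact i) *\<^sub>R ((a j * sq j) * lp j ^ i) + (\<tau> ^ i / fact i) *\<^sub>R ((b j * sq j) * lm j ^ i),
            (\<tau> ^ i / fact i) *\<^sub>R ((a j * lp j) * lp j ^ i) + (\<tau> ^ i / fact i) *\<^sub>R ((b j * lm j) * lm j ^ i)))"
      using True by (simp add: An_pow_vec vec_eq algebra_simps)
    moreover have "\<dots> sums ((a j * sq j) * exp (complex_of_real \<tau> * lp j) + (b j * sq j) * exp (complex_of_real \<tau> * lm j),
         (a j * lp j) * exp (complex_of_real \<tau> * lp j) + (b j * lm j) * exp (complex_of_real \<tau> * lm j))"
      by (intro sums_Pair sums_add exp_sums)
    ultimately show ?thesis using True
      by (simp add: semi_def vec_eq sums_unique[symmetric] algebra_simps)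
  qed
qed

lemma vec_diff: "(\<lambda>j. vec n a b j - vec n a' b' j) = vec n (\<lambda>k. a k - a' k) (\<lambda>k. b k - b' k)"
  by (rule ext) (simp add: vec_eq algebra_simps)

lemma hinner_self_zero:
  assumes "hinner (vec n a b) (vec n a b) = 0"
  shows "vec n a b = (\<lambda>j. (0, 0))"
proof -
  let ?x = "vec n a b"
  have "hinner ?x ?x = (\<Sum>j\<le>n. fst (?x j) * cnj (fst (?x j)) + snd (?x j) * cnj (snd (?x j)))"
    unfolding hinner_def by (rule suminf_finite) (auto simp: vec_eq)
  also have "\<dots> = of_real (\<Sum>j\<le>n. (cmod (fst (?x j)))\<^sup>2 + (cmod (snd (?x j)))\<^sup>2)"
    unfolding of_real_sum of_real_add complex_norm_square ..
  finally have "complex_of_real (\<Sum>j\<le>n. (cmod (fst (?x j)))\<^sup>2 + (cmod (snd (?x j)))\<^sup>2) = 0"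
    using assms by metis
  then have "(\<Sum>j\<le>n. (cmod (fst (?x j)))\<^sup>2 + (cmod (snd (?x j)))\<^sup>2) = 0"
    by (simp only: of_real_eq_0_iff)
  then have "\<forall>j\<in>{..n}. (cmod (fst (?x j)))\<^sup>2 + (cmod (snd (?x j)))\<^sup>2 = 0"
    by (subst (asm) sum_nonneg_eq_0_iff) auto
  then have "\<forall>j\<le>n. ?x j = (0, 0)"
    by (auto simp: prod_eq_iff add_nonneg_eq_0_iff)
  then show ?thesis by (auto simp: vec_eq)
qed

lemma Pn_id:
  assumes "p \<in> Hn \<mu> \<rho> \<alpha> n"
  shows "Pn \<mu> \<rho> \<alpha> n p = p"
  unfolding Pn_def
proof (rule the_equality)
  have "hinner (\<lambda>j. p j - p j) w = 0" for w
    unfolding hinner_def by (simp add: zero_prod_def[symmetric])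
  then show "p \<in> Hn \<mu> \<rho> \<alpha> n \<and> (\<forall>w\<in>Hn \<mu> \<rho> \<alpha> n. hinner (\<lambda>j. p j - p j) w = 0)"
    using assms by blast
next
  fix q assume q: "q \<in> Hn \<mu> \<rho> \<alpha> n \<and> (\<forall>w\<in>Hn \<mu> \<rho> \<alpha> n. hinner (\<lambda>j. p j - q j) w = 0)"
  obtain a b where p: "p = vec n a b" using assms Hn_iff by blast
  obtain a' b' where qq: "q = vec n a' b'" using q Hn_iff by blast
  have w_in: "(\<lambda>j. p j - q j) \<in> Hn \<mu> \<rho> \<alpha> n"
    unfolding p qq vec_diff by (rule vec_in)
  then have "hinner (\<lambda>j. p j - q j) (\<lambda>j. p j - q j) = 0"
    using q by blast
  then have "vec n (\<lambda>k. a k - a' k) (\<lambda>k. b k - b' k) = (\<lambda>j. (0, 0))"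
    unfolding p qq vec_diff by (rule hinner_self_zero)
  then have z: "(\<lambda>j. p j - q j) = (\<lambda>j. (0,0))" unfolding p qq vec_diff .
  show "q = p"
  proof
    fix j
    have "p j - q j = 0" using fun_cong[OF z, of j] by (simp add: zero_prod_def)
    then show "q j = p j" by simp
  qed
qed

definition "kk k = complex_of_real (\<mu> k powr (- \<gamma>)) / dd k"

lemma Gop_vec:
  assumes "\<And>k. n < k \<Longrightarrow> w k = 0"
  shows "Gop \<mu> \<gamma> w = vec n (\<lambda>k. kk k * w k) (\<lambda>k. - kk k * w k)"
proof
  fix j
  show "Gop \<mu> \<gamma> w j = vec n (\<lambda>k. kk k * w k) (\<lambda>k. - kk k * w k) j"
  proof (cases "j \<le> n")
    case True
    have "kk j * w j * lp j + - kk j * w j * lm j = kk j * w j * dd j" by (simp add: dd_eq algebra_simps)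
    also have "\<dots> = complex_of_real (\<mu> j powr (- \<gamma>)) * w j" using dd_nz[of j] by (simp add: kk_def)
    finally show ?thesis using True by (simp add: Gop_def vec_eq)
  next
    case False
    then show ?thesis using assms[of j] by (simp add: Gop_def vec_eq)
  qed
qed

lemma Gn_vec:
  assumes "\<And>k. n < k \<Longrightarrow> w k = 0"
  shows "Gn \<mu> \<rho> \<alpha> \<gamma> n w = vec n (\<lambda>k. kk k * w k) (\<lambda>k. - kk k * w k)"
proof -
  have "Gop \<mu> \<gamma> w = vec n (\<lambda>k. kk k * w k) (\<lambda>k. - kk k * w k)" using Gop_vec assms by blast
  then show ?thesis unfolding Gn_def using Pn_id[OF vec_in] by metis
qed

end


context ctl begin

definition "ww t z = (2 / complex_of_real t) * z - 1"
definition "php c z = 1 - (10 * (c * z - 1)^3 - 15 * (c * z - 1)^4 + 6 * (c * z - 1)^5)"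
definition "php1 c z = - (30 * (c * z - 1)^2 - 60 * (c * z - 1)^3 + 30 * (c * z - 1)^4) * c"
definition "php2 c z = - (60 * (c * z - 1) - 180 * (c * z - 1)^2 + 120 * (c * z - 1)^3) * (c * c)"
definition "ph t = php (2 / complex_of_real t)"
definition "ph1 t = php1 (2 / complex_of_real t)"
definition "ph2 t = php2 (2 / complex_of_real t)"

lemma php_deriv: "(php c has_field_derivative php1 c z) (at z)"
  unfolding php_def php1_def
  by (auto intro!: derivative_eq_intros simp: algebra_simps)

lemma php1_deriv: "(php1 c has_field_derivative php2 c z) (at z)"
  unfolding php1_def php2_def
  by (auto intro!: derivative_eq_intros simp: algebra_simps)

lemma ph_deriv: "(ph t has_field_derivative ph1 t z) (at z)"
  unfolding ph_def ph1_def by (rule php_deriv)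
lemma ph1_deriv: "(ph1 t has_field_derivative ph2 t z) (at z)"
  unfolding ph1_def ph2_def by (rule php1_deriv)

lemma ph_eq: "ph t z = 1 - (10 * (ww t z)^3 - 15 * (ww t z)^4 + 6 * (ww t z)^5)"
  "ph1 t z = - (30 * (ww t z)^2 - 60 * (ww t z)^3 + 30 * (ww t z)^4) * (2 / complex_of_real t)"
  "ph2 t z = - (60 * (ww t z) - 180 * (ww t z)^2 + 120 * (ww t z)^3) * ((2 / complex_of_real t) * (2 / complex_of_real t))"
  by (simp_all add: ph_def ph1_def ph2_def php_def php1_def php2_def ww_def)

lemma ww_half: "t \<noteq> 0 \<Longrightarrow> ww t (complex_of_real (t/2)) = 0"
  by (simp add: ww_def)
lemma ww_end: "t \<noteq> 0 \<Longrightarrow> ww t (complex_of_real t) = 1"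
  by (simp add: ww_def)

lemma ph_vals:
  assumes "t \<noteq> 0"
  shows "ph t (of_real (t/2)) = 1" "ph1 t (of_real (t/2)) = 0" "ph2 t (of_real (t/2)) = 0"
    "ph t (of_real t) = 0" "ph1 t (of_real t) = 0" "ph2 t (of_real t) = 0"
  using ww_half[OF assms] ww_end[OF assms] by (simp_all add: ph_eq)

definition "vf t k A B z = complex_of_real (\<mu> k powr \<gamma>) *
   (A * exp (z * lp k) * (ph2 t z + dd k * ph1 t z) + B * exp (z * lm k) * (ph2 t z - dd k * ph1 t z))"

lemma vf_half: "t \<noteq> 0 \<Longrightarrow> vf t k A B (of_real (t/2)) = 0"
  unfolding vf_def ph_vals by simp

lemma kk_mu: "kk k * complex_of_real (\<mu> k powr \<gamma>) = 1 / dd k"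
proof -
  have "\<mu> k powr (- \<gamma>) * \<mu> k powr \<gamma> = 1" using mu_pos[of k] by (simp add: powr_add[symmetric])
  then have "complex_of_real (\<mu> k powr (- \<gamma>)) * complex_of_real (\<mu> k powr \<gamma>) = 1"
    by (metis of_real_1 of_real_mult)
  then show ?thesis by (simp add: kk_def field_simps)
qed

lemma exp_comb: "x + y = z \<Longrightarrow> exp x * exp y = exp (z::complex)"
  by (simp add: exp_add[symmetric])

lemma int_p:
  assumes t: "0 < t"
  shows "((\<lambda>s. exp (complex_of_real (t - s) * lp k) * (kk k * vf t k A B (complex_of_real (max s (t/2)))))
          has_integral (- (exp (complex_of_real t * lp k) * A))) {0..t}"
proof -
  let ?c = "\<lambda>s. exp (complex_of_real (t - s) * lp k) * (kk k * vf t k A B (complex_of_real (max s (t/2))))"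
  have t0: "t \<noteq> 0" using t by simp
  have 1: "(?c has_integral 0) {0..t/2}"
  proof -
    have "?c s = 0" if "s \<in> {0..t/2}" for s
      using that vf_half[OF t0] by (simp add: max_def)
    then show ?thesis using has_integral_cong[of "{0..t/2}" ?c "\<lambda>_. 0" 0] by simp
  qed
  define F where "F z = (1 / dd k) * (A * exp (complex_of_real t * lp k) * (ph1 t z + dd k * ph t z)
      + B * exp (complex_of_real t * lp k - z * dd k) * ph1 t z)" for z
  define F' where "F' z = (1 / dd k) * (A * exp (complex_of_real t * lp k) * (ph2 t z + dd k * ph1 t z)
      + B * exp (complex_of_real t * lp k - z * dd k) * (ph2 t z - dd k * ph1 t z))" for z
  have dF: "(F has_field_derivative F' z) (at z)" for z
    unfolding F_def F'_def
    using dd_nz[of k] by (auto intro!: derivative_eq_intros ph_deriv ph1_deriv simp: field_simps)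
  have 2: "((\<lambda>s. F' (of_real s)) has_integral (F (of_real t) - F (of_real (t/2)))) {t/2..t}"
    by (rule fundamental_theorem_of_calculus) (use t in \<open>auto intro!: has_vector_derivative_real_field dF\<close>)
  have "?c s = F' (of_real s)" if "s \<in> {t/2..t}" for s
  proof -
    have ms: "max s (t/2) = s" using that by auto
    have e1: "exp (complex_of_real (t - s) * lp k) * exp (complex_of_real s * lp k) = exp (complex_of_real t * lp k)"
      by (rule exp_comb) (simp add: algebra_simps)
    have e2: "exp (complex_of_real (t - s) * lp k) * exp (complex_of_real s * lm k) = exp (complex_of_real t * lp k - complex_of_real s * dd k)"
      by (rule exp_comb) (simp add: algebra_simps dd_eq)
    have "?c s = (kk k * complex_of_real (\<mu> k powr \<gamma>)) *
       (A * (exp (complex_of_real (t - s) * lp k) * exp (complex_of_real s * lp k)) * (ph2 t s + dd k * ph1 t s)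
        + B * (exp (complex_of_real (t - s) * lp k) * exp (complex_of_real s * lm k)) * (ph2 t s - dd k * ph1 t s))"
      unfolding ms vf_def by (simp add: algebra_simps)
    also have "\<dots> = F' (of_real s)" unfolding kk_mu e1 e2 F'_def by simp
    finally show ?thesis .
  qed
  with 2 have 3: "(?c has_integral (F (of_real t) - F (of_real (t/2)))) {t/2..t}"
    using has_integral_cong[of "{t/2..t}" ?c "\<lambda>s. F' (of_real s)"] by simp
  have "F (of_real t) - F (of_real (t/2)) = - (exp (complex_of_real t * lp k) * A)"
    unfolding F_def ph_vals[OF t0] using dd_nz[of k] by (simp add: field_simps)
  moreover have "(?c has_integral (0 + (F (of_real t) - F (of_real (t/2))))) {0..t}"
    by (rule has_integral_combine[OF _ _ 1 3]) (use t in auto)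
  ultimately show ?thesis by simp
qed

lemma int_m:
  assumes t: "0 < t"
  shows "((\<lambda>s. exp (complex_of_real (t - s) * lm k) * (- kk k * vf t k A B (complex_of_real (max s (t/2)))))
          has_integral (- (exp (complex_of_real t * lm k) * B))) {0..t}"
proof -
  let ?c = "\<lambda>s. exp (complex_of_real (t - s) * lm k) * (- kk k * vf t k A B (complex_of_real (max s (t/2))))"
  have t0: "t \<noteq> 0" using t by simp
  have 1: "(?c has_integral 0) {0..t/2}"
  proof -
    have "?c s = 0" if "s \<in> {0..t/2}" for s
      using that vf_half[OF t0] by (simp add: max_def)
    then show ?thesis using has_integral_cong[of "{0..t/2}" ?c "\<lambda>_. 0" 0] by simp
  qed
  define F where "F z = - (1 / dd k) * (A * exp (complex_of_real t * lm k + z * dd k) * ph1 t z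
      + B * exp (complex_of_real t * lm k) * (ph1 t z - dd k * ph t z))" for z
  define F' where "F' z = - (1 / dd k) * (A * exp (complex_of_real t * lm k + z * dd k) * (ph2 t z + dd k * ph1 t z)
      + B * exp (complex_of_real t * lm k) * (ph2 t z - dd k * ph1 t z))" for z
  have dF: "(F has_field_derivative F' z) (at z)" for z
    unfolding F_def F'_def
    using dd_nz[of k] by (auto intro!: derivative_eq_intros ph_deriv ph1_deriv simp: field_simps)
  have 2: "((\<lambda>s. F' (of_real s)) has_integral (F (of_real t) - F (of_real (t/2)))) {t/2..t}"
    by (rule fundamental_theorem_of_calculus) (use t in \<open>auto intro!: has_vector_derivative_real_field dF\<close>)
  have "?c s = F' (of_real s)" if "s \<in> {t/2..t}" for s
  proof -
    have ms: "max s (t/2) = s" using that by auto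
    have e1: "exp (complex_of_real (t - s) * lm k) * exp (complex_of_real s * lp k) = exp (complex_of_real t * lm k + complex_of_real s * dd k)"
      by (rule exp_comb) (simp add: algebra_simps dd_eq)
    have e2: "exp (complex_of_real (t - s) * lm k) * exp (complex_of_real s * lm k) = exp (complex_of_real t * lm k)"
      by (rule exp_comb) (simp add: algebra_simps)
    have "?c s = - (kk k * complex_of_real (\<mu> k powr \<gamma>)) *
       (A * (exp (complex_of_real (t - s) * lm k) * exp (complex_of_real s * lp k)) * (ph2 t s + dd k * ph1 t s)
        + B * (exp (complex_of_real (t - s) * lm k) * exp (complex_of_real s * lm k)) * (ph2 t s - dd k * ph1 t s))"
      unfolding ms vf_def by (simp add: algebra_simps)
    also have "\<dots> = F' (of_real s)" unfolding kk_mu e1 e2 F'_def by simp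
    finally show ?thesis .
  qed
  with 2 have 3: "(?c has_integral (F (of_real t) - F (of_real (t/2)))) {t/2..t}"
    using has_integral_cong[of "{t/2..t}" ?c "\<lambda>s. F' (of_real s)"] by simp
  have "F (of_real t) - F (of_real (t/2)) = - (exp (complex_of_real t * lm k) * B)"
    unfolding F_def ph_vals[OF t0] using dd_nz[of k] by (simp add: field_simps)
  moreover have "(?c has_integral (0 + (F (of_real t) - F (of_real (t/2))))) {0..t}"
    by (rule has_integral_combine[OF _ _ 1 3]) (use t in auto)
  ultimately show ?thesis by simp
qed


definition "ctrl n t a b = (\<lambda>s k. if k \<le> n then vf t k (a k) (b k) (complex_of_real (max s (t/2))) else 0)"

lemma vf_cont: "continuous_on S (\<lambda>s. vf t k A B (complex_of_real (max s (t/2))))"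
  unfolding vf_def ph1_def ph2_def php1_def php2_def
  by (intro continuous_intros)

lemma integrand_eq:
  "semi \<mu> \<rho> \<alpha> n (t - s) (Gn \<mu> \<rho> \<alpha> \<gamma> n (ctrl n t a b s)) =
   vec n (\<lambda>k. exp (complex_of_real (t - s) * lp k) * (kk k * ctrl n t a b s k))
         (\<lambda>k. exp (complex_of_real (t - s) * lm k) * (- kk k * ctrl n t a b s k))"
proof -
  have "Gn \<mu> \<rho> \<alpha> \<gamma> n (ctrl n t a b s) = vec n (\<lambda>k. kk k * ctrl n t a b s k) (\<lambda>k. - kk k * ctrl n t a b s k)"
    by (rule Gn_vec) (simp add: ctrl_def)
  then show ?thesis by (simp add: semi_vec)
qed

lemma Ysol_zero:
  assumes t: "0 < t"
  shows "Ysol \<mu> \<rho> \<alpha> \<gamma> n (vec n a b) (ctrl n t a b) t = (\<lambda>j. (0, 0))"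
proof
  fix j
  show "Ysol \<mu> \<rho> \<alpha> \<gamma> n (vec n a b) (ctrl n t a b) t j = (0, 0)"
  proof (cases "j \<le> n")
    case False
    then show ?thesis
      by (simp add: Ysol_def integrand_eq semi_vec vec_eq zero_prod_def[symmetric] set_lebesgue_integral_def)
  next
    case True
    define c1 where "c1 s = exp (complex_of_real (t - s) * lp j) * (kk j * vf t j (a j) (b j) (complex_of_real (max s (t/2))))" for s
    define c2 where "c2 s = exp (complex_of_real (t - s) * lm j) * (- kk j * vf t j (a j) (b j) (complex_of_real (max s (t/2))))" for s
    define L1 where "L1 c = (c * sq j, c * lp j)" for c
    define L2 where "L2 c = (c * sq j, c * lm j)" for c
    have bl1: "bounded_linear L1" unfolding L1_def
      by (intro bounded_linear_Pair bounded_linear_mult_left)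
    have bl2: "bounded_linear L2" unfolding L2_def
      by (intro bounded_linear_Pair bounded_linear_mult_left)
    let ?f = "\<lambda>s. semi \<mu> \<rho> \<alpha> n (t - s) (Gn \<mu> \<rho> \<alpha> \<gamma> n (ctrl n t a b s)) j"
    have feq: "?f = (\<lambda>s. L1 (c1 s) + L2 (c2 s))"
      unfolding integrand_eq using True by (auto simp: vec_eq c1_def c2_def L1_def L2_def ctrl_def algebra_simps)
    have i1: "((L1 \<circ> c1) has_integral L1 (- (exp (complex_of_real t * lp j) * a j))) {0..t}"
      by (rule has_integral_linear[OF _ bl1]) (unfold c1_def, rule int_p[OF t])
    have i2: "((L2 \<circ> c2) has_integral L2 (- (exp (complex_of_real t * lm j) * b j))) {0..t}"
      by (rule has_integral_linear[OF _ bl2]) (unfold c2_def, rule int_m[OF t])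
    have hi: "((\<lambda>s. L1 (c1 s) + L2 (c2 s)) has_integral
        (L1 (- (exp (complex_of_real t * lp j) * a j)) + L2 (- (exp (complex_of_real t * lm j) * b j)))) {0..t}"
      using has_integral_add[OF i1 i2] by (simp add: o_def)
    have cont: "continuous_on {0..t} (\<lambda>s. L1 (c1 s) + L2 (c2 s))"
      unfolding L1_def L2_def c1_def c2_def
      by (intro continuous_intros vf_cont)
    have "set_lebesgue_integral lborel {0..t} ?f = integral {0..t} (\<lambda>s. L1 (c1 s) + L2 (c2 s))"
      unfolding feq by (rule set_borel_integral_eq_integral(2)[OF borel_integrable_atLeastAtMost'[OF cont]])
    also have "\<dots> = L1 (- (exp (complex_of_real t * lp j) * a j)) + L2 (- (exp (complex_of_real t * lm j) * b j))"
      using hi by (rule integral_unique)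
    finally have I: "set_lebesgue_integral lborel {0..t} ?f = L1 (- (exp (complex_of_real t * lp j) * a j)) + L2 (- (exp (complex_of_real t * lm j) * b j))" .
    show ?thesis
      unfolding Ysol_def I using True by (simp add: semi_vec vec_eq L1_def L2_def algebra_simps)
  qed
qed

end


context ctl begin

definition "kap k = min (bb k / 2) (\<mu> k / bb k)"

lemma kap_nonneg: "0 \<le> kap k"
  using bb_pos[of k] mu_pos[of k] by (simp add: kap_def)

lemma Re_dd: "Re (dd k) = (if 0 \<le> DD k then sqrt (DD k) else 0)"
  by (simp add: dd_def)

lemma cmod_dd: "cmod (dd k) = sqrt \<bar>DD k\<bar>"
  by (simp add: dd_def)

lemma Re_lp: "Re (lp k) \<le> - kap k"
proof -
  have Rl: "Re (lp k) = (- bb k + Re (dd k)) / 2" by (simp add: lp_def')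
  show ?thesis
  proof (cases "0 \<le> DD k")
    case True
    define r where "r = sqrt (DD k)"
    have r0: "0 \<le> r" using True by (simp add: r_def)
    have r2: "r\<^sup>2 = (bb k)\<^sup>2 - 4 * \<mu> k" using True by (simp add: r_def DD_eq)
    have b0: "0 < bb k" by (rule bb_pos)
    have m0: "0 < \<mu> k" by (rule mu_pos)
    have rb: "r \<le> bb k" using r2 m0 b0 r0 by (smt (verit) power2_le_imp_le power_mono)
    have "(bb k - r) * (bb k + r) = 4 * \<mu> k" using r2 by (simp add: algebra_simps power2_eq_square)
    then have "(bb k - r) * (2 * bb k) \<ge> 4 * \<mu> k" using rb r0
      by (smt (verit, best) mult_left_mono)
    then have "bb k - r \<ge> 2 * \<mu> k / bb k" using b0 by (simp add: field_simps)
    then have "(- bb k + r) / 2 \<le> - (\<mu> k / bb k)" by simp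
    moreover have "kap k \<le> \<mu> k / bb k" unfolding kap_def by (rule min.cobounded2)
    ultimately show ?thesis using True unfolding Rl Re_dd r_def by simp
  next
    case False
    have "kap k \<le> bb k / 2" unfolding kap_def by (rule min.cobounded1)
    then show ?thesis using False unfolding Rl Re_dd by simp
  qed
qed

lemma Re_lm: "Re (lm k) \<le> - kap k"
proof -
  have Rl: "Re (lm k) = (- bb k - Re (dd k)) / 2" by (simp add: lm_def')
  have "0 \<le> Re (dd k)" unfolding dd_def by (rule Re_csqrt)
  moreover have "kap k \<le> bb k / 2" unfolding kap_def by (rule min.cobounded1)
  ultimately show ?thesis unfolding Rl by simp
qed

lemma exp_bound:
  assumes "Re l \<le> - kap k" "t / 2 \<le> \<sigma>" "0 < t"
  shows "cmod (exp (complex_of_real \<sigma> * l)) \<le> exp (- kap k * t / 2)"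
proof -
  have s0: "0 \<le> \<sigma>" using assms by simp
  have "\<sigma> * Re l \<le> \<sigma> * (- kap k)" using assms(1) s0 by (rule mult_left_mono)
  also have "\<dots> \<le> (t/2) * (- kap k)"
  proof -
    have "(t/2) * kap k \<le> \<sigma> * kap k" by (rule mult_right_mono[OF assms(2) kap_nonneg])
    then show ?thesis by simp
  qed
  finally show ?thesis by (simp add: mult.commute)
qed


lemma wq: "(w::real) * (1 - w) \<le> 1/4"
proof -
  have "0 \<le> (w - 1/2)^2" by simp
  then show ?thesis by (simp add: power2_eq_square algebra_simps)
qed

lemma poly1:
  assumes "0 \<le> (w::real)" "w \<le> 1"
  shows "\<bar>30 * w^2 - 60 * w^3 + 30 * w^4\<bar> \<le> 2"
proof -
  define q where "q = (w * (1 - w))^2"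
  have e: "30 * w^2 - 60 * w^3 + 30 * w^4 = 30 * q"
    by (simp add: q_def power2_eq_square power3_eq_cube power4_eq_xxxx algebra_simps)
  have "0 \<le> w * (1 - w)" using assms by simp
  then have "q \<le> (1/4)^2" unfolding q_def using wq[of w] by (intro power_mono) auto
  moreover have "0 \<le> q" by (simp add: q_def)
  ultimately show ?thesis unfolding e by (simp add: abs_of_nonneg power2_eq_square)
qed

lemma poly2:
  assumes "0 \<le> (w::real)" "w \<le> 1"
  shows "\<bar>60 * w - 180 * w^2 + 120 * w^3\<bar> \<le> 15"
proof -
  define p where "p = w * (1 - w)"
  define c where "c = 1 - 2 * w"
  have e: "60 * w - 180 * w^2 + 120 * w^3 = 60 * p * c"
    by (simp add: p_def c_def power2_eq_square power3_eq_cube algebra_simps)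
  have a: "0 \<le> p" using assms by (simp add: p_def)
  have cc: "\<bar>c\<bar> \<le> 1" using assms by (simp add: c_def)
  have pq: "p \<le> 1/4" unfolding p_def by (rule wq)
  have "\<bar>60 * p * c\<bar> = 60 * p * \<bar>c\<bar>"
    using a by (simp add: abs_mult)
  also have "\<dots> \<le> 60 * (1/4) * 1"
    using a cc pq by (intro mult_mono) auto
  finally show ?thesis unfolding e by simp
qed

lemma ph_bounds:
  assumes t: "0 < t" and s: "t / 2 \<le> \<sigma>" "\<sigma> \<le> t"
  shows "cmod (ph1 t (of_real \<sigma>)) \<le> 4 / t" "cmod (ph2 t (of_real \<sigma>)) \<le> 60 / t\<^sup>2"
proof -
  define w where "w = 2 / t * \<sigma> - 1"
  have w0: "0 \<le> w" and w1: "w \<le> 1" using t s by (auto simp: w_def field_simps)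
  have "ph1 t (of_real \<sigma>) = of_real (- (30 * w^2 - 60 * w^3 + 30 * w^4) * (2 / t))"
    by (simp add: ph_eq ww_def w_def)
  then have "cmod (ph1 t (of_real \<sigma>)) = \<bar>30 * w^2 - 60 * w^3 + 30 * w^4\<bar> * (2 / t)"
    using t by (simp only: norm_of_real abs_mult abs_minus_cancel) simp
  also have "\<dots> \<le> 2 * (2 / t)" using t poly1[OF w0 w1] by (intro mult_right_mono) auto
  finally show "cmod (ph1 t (of_real \<sigma>)) \<le> 4 / t" by simp
  have "ph2 t (of_real \<sigma>) = of_real (- (60 * w - 180 * w^2 + 120 * w^3) * (4 / t\<^sup>2))"
    by (simp add: ph_eq ww_def w_def power2_eq_square)
  then have "cmod (ph2 t (of_real \<sigma>)) = \<bar>60 * w - 180 * w^2 + 120 * w^3\<bar> * (4 / t\<^sup>2)"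
    using t by (simp only: norm_of_real abs_mult abs_minus_cancel) simp
  also have "\<dots> \<le> 15 * (4 / t\<^sup>2)" using t poly2[OF w0 w1] by (intro mult_right_mono) auto
  finally show "cmod (ph2 t (of_real \<sigma>)) \<le> 60 / t\<^sup>2" by simp
qed


definition "PP t k = 60 / t\<^sup>2 + cmod (dd k) * (4 / t)"

lemma vf_bound:
  assumes t: "0 < t" and s: "t / 2 \<le> \<sigma>" "\<sigma> \<le> t"
  shows "cmod (vf t k A B (of_real \<sigma>)) \<le> \<mu> k powr \<gamma> * ((cmod A + cmod B) * (exp (- kap k * t / 2) * PP t k))"
proof -
  let ?E = "exp (- kap k * t / 2)"
  have b1: "cmod (ph1 t (of_real \<sigma>)) \<le> 4 / t" and b2: "cmod (ph2 t (of_real \<sigma>)) \<le> 60 / t\<^sup>2"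
    using ph_bounds[OF t s] by auto
  have X: "cmod (ph2 t (of_real \<sigma>) + dd k * ph1 t (of_real \<sigma>)) \<le> PP t k"
  proof -
    have "cmod (ph2 t (of_real \<sigma>) + dd k * ph1 t (of_real \<sigma>)) \<le> cmod (ph2 t (of_real \<sigma>)) + cmod (dd k) * cmod (ph1 t (of_real \<sigma>))"
      by (metis norm_mult norm_triangle_ineq)
    also have "\<dots> \<le> PP t k" unfolding PP_def using b1 b2 by (intro add_mono mult_left_mono) auto
    finally show ?thesis .
  qed
  have Y: "cmod (ph2 t (of_real \<sigma>) - dd k * ph1 t (of_real \<sigma>)) \<le> PP t k"
  proof -
    have "cmod (ph2 t (of_real \<sigma>) - dd k * ph1 t (of_real \<sigma>)) \<le> cmod (ph2 t (of_real \<sigma>)) + cmod (dd k) * cmod (ph1 t (of_real \<sigma>))"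
      by (metis norm_mult norm_triangle_ineq4)
    also have "\<dots> \<le> PP t k" unfolding PP_def using b1 b2 by (intro add_mono mult_left_mono) auto
    finally show ?thesis .
  qed
  have e1: "cmod (exp (of_real \<sigma> * lp k)) \<le> ?E" by (rule exp_bound[OF Re_lp s(1) t])
  have e2: "cmod (exp (of_real \<sigma> * lm k)) \<le> ?E" by (rule exp_bound[OF Re_lm s(1) t])
  have "cmod (A * exp (of_real \<sigma> * lp k) * (ph2 t (of_real \<sigma>) + dd k * ph1 t (of_real \<sigma>)))
      \<le> cmod A * (?E * PP t k)"
    unfolding norm_mult mult.assoc using e1 X by (intro mult_left_mono mult_mono) auto
  moreover have "cmod (B * exp (of_real \<sigma> * lm k) * (ph2 t (of_real \<sigma>) - dd k * ph1 t (of_real \<sigma>)))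
      \<le> cmod B * (?E * PP t k)"
    unfolding norm_mult mult.assoc using e2 Y by (intro mult_left_mono mult_mono) auto
  ultimately have "cmod (A * exp (of_real \<sigma> * lp k) * (ph2 t (of_real \<sigma>) + dd k * ph1 t (of_real \<sigma>))
      + B * exp (of_real \<sigma> * lm k) * (ph2 t (of_real \<sigma>) - dd k * ph1 t (of_real \<sigma>)))
      \<le> (cmod A + cmod B) * (?E * PP t k)"
    by (smt (verit) distrib_right norm_triangle_ineq)
  moreover have "cmod (vf t k A B (of_real \<sigma>)) = \<mu> k powr \<gamma> * cmod (A * exp (of_real \<sigma> * lp k) * (ph2 t (of_real \<sigma>) + dd k * ph1 t (of_real \<sigma>))
      + B * exp (of_real \<sigma> * lm k) * (ph2 t (of_real \<sigma>) - dd k * ph1 t (of_real \<sigma>)))"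
    unfolding vf_def norm_mult by simp
  ultimately show ?thesis by (metis mult_left_mono powr_ge_zero)
qed

lemma coef_bound:
  shows "cmod A + cmod B \<le> (2 + (cmod (lp k) + cmod (lm k)) / sqrt (\<mu> k)) / cmod (dd k)
     * (cmod (A * sq k + B * sq k) + cmod (A * lp k + B * lm k))"
proof -
  let ?x = "A * sq k + B * sq k" and ?y = "A * lp k + B * lm k"
  have sq0: "sq k \<noteq> 0" using mu_pos[of k] by (simp add: sq_def)
  have nsq: "cmod (sq k) = sqrt (\<mu> k)" using mu_pos[of k] by (simp add: sq_def)
  have m0: "0 < sqrt (\<mu> k)" using mu_pos[of k] by simp
  have d0: "0 < cmod (dd k)" using dd_nz[of k] by simp
  have xs: "?x / sq k = A + B" using sq0 by (simp add: field_simps)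
  have hA: "A * dd k = ?y - lm k * (?x / sq k)" unfolding xs dd_eq by (simp add: algebra_simps)
  have hB: "B * dd k = lp k * (?x / sq k) - ?y" unfolding xs dd_eq by (simp add: algebra_simps)
  have nx: "cmod (?x / sq k) = cmod ?x / sqrt (\<mu> k)" by (simp add: norm_divide nsq)
  have "cmod A * cmod (dd k) = cmod (?y - lm k * (?x / sq k))" using hA by (metis norm_mult)
  also have "\<dots> \<le> cmod ?y + cmod (lm k * (?x / sq k))" by (rule norm_triangle_ineq4)
  also have "\<dots> = cmod ?y + cmod (lm k) * (cmod ?x / sqrt (\<mu> k))" by (simp only: norm_mult nx)
  finally have 1: "cmod A * cmod (dd k) \<le> cmod ?y + cmod (lm k) * (cmod ?x / sqrt (\<mu> k))" .
  have "cmod B * cmod (dd k) = cmod (lp k * (?x / sq k) - ?y)" using hB by (metis norm_mult)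
  also have "\<dots> \<le> cmod (lp k * (?x / sq k)) + cmod ?y" by (rule norm_triangle_ineq4)
  also have "\<dots> = cmod (lp k) * (cmod ?x / sqrt (\<mu> k)) + cmod ?y" by (simp only: norm_mult nx)
  finally have 2: "cmod B * cmod (dd k) \<le> cmod (lp k) * (cmod ?x / sqrt (\<mu> k)) + cmod ?y" .
  have e: "(cmod (lp k) + cmod (lm k)) * cmod ?x / sqrt (\<mu> k) = cmod (lm k) * (cmod ?x / sqrt (\<mu> k)) + cmod (lp k) * (cmod ?x / sqrt (\<mu> k))"
    by (simp add: add_divide_distrib distrib_right)
  have "(cmod A + cmod B) * cmod (dd k) \<le> 2 * cmod ?y + (cmod (lm k) * (cmod ?x / sqrt (\<mu> k)) + cmod (lp k) * (cmod ?x / sqrt (\<mu> k)))"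
    using 1 2 by (simp only: distrib_right)
  also have "\<dots> = 2 * cmod ?y + (cmod (lp k) + cmod (lm k)) * cmod ?x / sqrt (\<mu> k)"
    by (simp only: e)
  also have "\<dots> \<le> (2 + (cmod (lp k) + cmod (lm k)) / sqrt (\<mu> k)) * (cmod ?x + cmod ?y)"
  proof -
    have q: "0 \<le> (cmod (lp k) + cmod (lm k)) / sqrt (\<mu> k)" using m0 by simp
    have "2 * cmod ?y + (cmod (lp k) + cmod (lm k)) * cmod ?x / sqrt (\<mu> k)
        = 2 * cmod ?y + ((cmod (lp k) + cmod (lm k)) / sqrt (\<mu> k)) * cmod ?x" by simp
    also have "\<dots> \<le> (2 + (cmod (lp k) + cmod (lm k)) / sqrt (\<mu> k)) * (cmod ?x + cmod ?y)"
    proof -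
      define qq where "qq = (cmod (lp k) + cmod (lm k)) / sqrt (\<mu> k)"
      have E: "(2 + qq) * (cmod ?x + cmod ?y) = 2 * cmod ?y + qq * cmod ?x + (2 * cmod ?x + qq * cmod ?y)"
        by (simp add: algebra_simps)
      have "0 \<le> qq" using q unfolding qq_def .
      then have "0 \<le> 2 * cmod ?x + qq * cmod ?y" by simp
      with E have "2 * cmod ?y + qq * cmod ?x \<le> (2 + qq) * (cmod ?x + cmod ?y)" by linarith
      then show ?thesis unfolding qq_def by simp
    qed
    finally show ?thesis .
  qed
  finally show ?thesis using d0 by (simp add: field_simps)
qed

definition "Wf t k = \<mu> k powr \<gamma> * ((2 + (cmod (lp k) + cmod (lm k)) / sqrt (\<mu> k)) / cmod (dd k))
   * exp (- kap k * t / 2) * PP t k"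

lemma Wf_nonneg: "0 < t \<Longrightarrow> 0 \<le> Wf t k"
  unfolding Wf_def PP_def by (intro mult_nonneg_nonneg add_nonneg_nonneg divide_nonneg_nonneg) (auto intro: less_imp_le mu_pos)

lemma ctrl_bound:
  assumes t: "0 < t" and s: "0 \<le> s" "s \<le> t"
  shows "cmod (ctrl n t a b s j) \<le> Wf t j * (cmod (fst (vec n a b j)) + cmod (snd (vec n a b j)))"
proof (cases "j \<le> n")
  case False
  then show ?thesis using Wf_nonneg[OF t, of j] by (simp add: ctrl_def)
next
  case True
  let ?N = "cmod (a j * sq j + b j * sq j) + cmod (a j * lp j + b j * lm j)"
  let ?C = "(2 + (cmod (lp j) + cmod (lm j)) / sqrt (\<mu> j)) / cmod (dd j)"
  have sig: "t / 2 \<le> max s (t/2)" "max s (t/2) \<le> t" using s t by auto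
  have "cmod (ctrl n t a b s j) \<le> \<mu> j powr \<gamma> * ((cmod (a j) + cmod (b j)) * (exp (- kap j * t / 2) * PP t j))"
    using True vf_bound[OF t sig] by (simp add: ctrl_def)
  also have "\<dots> \<le> \<mu> j powr \<gamma> * ((?C * ?N) * (exp (- kap j * t / 2) * PP t j))"
    using coef_bound[of "a j" "b j" j] t by (intro mult_left_mono mult_right_mono mult_nonneg_nonneg) (auto simp: PP_def)
  also have "\<dots> = Wf t j * ?N" by (simp add: Wf_def)
  finally show ?thesis using True by (simp add: vec_eq)
qed

end



lemma base_lim: "((\<lambda>y::real. y powr q * exp (- y)) \<longlongrightarrow> 0) at_top"
  by real_asymp

lemma powr_at_top:
  assumes c: "0 < c" and d: "0 < (d::real)"
  shows "filterlim (\<lambda>x::real. c * x powr d) at_top at_top"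
proof -
  have "filterlim (\<lambda>x::real. exp (d * ln x)) at_top at_top"
    by (rule filterlim_compose[OF exp_at_top]) (rule filterlim_tendsto_pos_mult_at_top[OF tendsto_const d ln_at_top])
  then have "filterlim (\<lambda>x::real. x powr d) at_top at_top"
  proof (rule filterlim_cong[THEN iffD1, rotated 3])
    show "\<forall>\<^sub>F x in at_top. exp (d * ln x) = x powr d"
      using eventually_gt_at_top[of 0] by eventually_elim (simp add: powr_def)
  qed auto
  then show ?thesis by (rule filterlim_tendsto_pos_mult_at_top[OF tendsto_const c])
qed

lemma lim0:
  assumes c: "0 < c" and d: "0 < (d::real)"
  shows "((\<lambda>x::real. x^2 * exp (- c * x powr d)) \<longlongrightarrow> 0) at_top"
proof -
  have "((\<lambda>x. (c * x powr d) powr (2/d) * exp (- (c * x powr d))) \<longlongrightarrow> 0) at_top"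
    by (rule filterlim_compose[OF base_lim powr_at_top[OF c d]])
  then have "((\<lambda>x. c powr (-2/d) * ((c * x powr d) powr (2/d) * exp (- (c * x powr d)))) \<longlongrightarrow> c powr (-2/d) * 0) at_top"
    by (intro tendsto_mult tendsto_const)
  then show ?thesis
  proof (rule filterlim_cong[THEN iffD1, rotated 3])
    show "\<forall>\<^sub>F x in at_top. c powr (-2/d) * ((c * x powr d) powr (2/d) * exp (- (c * x powr d))) = x^2 * exp (- c * x powr d)"
      using eventually_gt_at_top[of 0]
    proof eventually_elim
      case (elim x)
      have "(c * x powr d) powr (2/d) = c powr (2/d) * x powr 2"
        using elim c d by (simp add: powr_mult powr_powr)
      moreover have "c powr (-2/d) * c powr (2/d) = 1" using c by (simp add: powr_add[symmetric])
      moreover have "x powr 2 = x^2" using elim by (simp add: powr_realpow)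
      ultimately show ?case by (simp add: algebra_simps)
    qed
  qed auto
qed



context ctl begin

lemma DD_big: "\<exists>M0 c0. 1 \<le> M0 \<and> 0 < c0 \<and> (\<forall>k. M0 \<le> \<mu> k \<longrightarrow> c0 * \<mu> k \<le> \<bar>DD k\<bar>)"
proof (cases "\<alpha> = 1/2")
  case True
  have r: "\<rho>\<^sup>2 \<noteq> 4" using nondeg[of 0] mu_pos[of 0] True by simp
  have "\<bar>DD k\<bar> = \<bar>\<rho>\<^sup>2 - 4\<bar> * \<mu> k" for k
  proof -
    have "DD k = (\<rho>\<^sup>2 - 4) * \<mu> k" using True mu_pos[of k] by (simp add: DD_def algebra_simps)
    then show ?thesis using mu_pos[of k] by (simp add: abs_mult)
  qed
  then show ?thesis using r by (intro exI[of _ 1] exI[of _ "\<bar>\<rho>\<^sup>2 - 4\<bar>"]) auto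
next
  case False
  define e where "e = 2 * \<alpha> - 1"
  have e0: "0 < e" using False alpha by (simp add: e_def)
  define M0 where "M0 = max 1 ((5 / \<rho>\<^sup>2) powr (1/e))"
  have "c0 * \<mu> k \<le> \<bar>DD k\<bar>" if "M0 \<le> \<mu> k" and "c0 = (1::real)" for k c0
  proof -
    have m0: "0 < \<mu> k" by (rule mu_pos)
    have "(5 / \<rho>\<^sup>2) powr (1/e) \<le> \<mu> k" using that by (simp add: M0_def)
    then have "((5 / \<rho>\<^sup>2) powr (1/e)) powr e \<le> \<mu> k powr e"
      using e0 by (intro powr_mono2) auto
    also have "((5 / \<rho>\<^sup>2) powr (1/e)) powr e = 5 / \<rho>\<^sup>2"
      using e0 rho_pos by (simp add: powr_powr)
    finally have A: "5 / \<rho>\<^sup>2 \<le> \<mu> k powr e" .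
    have "\<mu> k powr e * \<mu> k = \<mu> k powr (e + 1)" using m0 by (simp add: powr_add)
    then have "\<mu> k powr (2 * \<alpha>) = \<mu> k powr e * \<mu> k" by (simp add: e_def)
    then have "\<rho>\<^sup>2 * \<mu> k powr (2 * \<alpha>) = (\<rho>\<^sup>2 * \<mu> k powr e) * \<mu> k" by simp
    moreover have "\<rho>\<^sup>2 * \<mu> k powr e \<ge> 5" using A rho_pos by (simp add: field_simps)
    ultimately have "\<rho>\<^sup>2 * \<mu> k powr (2 * \<alpha>) \<ge> 5 * \<mu> k" using m0 by (metis mult_right_mono less_imp_le)
    then show ?thesis using that m0 by (simp add: DD_def)
  qed
  then show ?thesis by (intro exI[of _ M0] exI[of _ 1]) (auto simp: M0_def)
qed

lemma cmod_dd_le: "cmod (dd k) \<le> bb k + 2 * sqrt (\<mu> k)"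
proof -
  have m0: "0 < \<mu> k" by (rule mu_pos)
  have "\<bar>DD k\<bar> \<le> (bb k)\<^sup>2 + 4 * \<mu> k" using m0 by (auto simp: DD_eq abs_le_iff)
  also have "\<dots> \<le> (bb k + 2 * sqrt (\<mu> k))\<^sup>2"
  proof -
    have "(bb k + 2 * sqrt (\<mu> k))\<^sup>2 = (bb k)\<^sup>2 + (2 * sqrt (\<mu> k))\<^sup>2 + 2 * bb k * (2 * sqrt (\<mu> k))"
      by (rule power2_sum)
    moreover have "(2 * sqrt (\<mu> k))\<^sup>2 = 4 * \<mu> k" using m0 by (simp add: power_mult_distrib)
    moreover have "0 \<le> 2 * bb k * (2 * sqrt (\<mu> k))" using m0 bb_pos[of k] by simp
    ultimately show ?thesis by linarith
  qed
  finally have "sqrt \<bar>DD k\<bar> \<le> sqrt ((bb k + 2 * sqrt (\<mu> k))\<^sup>2)" by (rule real_sqrt_le_mono)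
  also have "\<dots> = bb k + 2 * sqrt (\<mu> k)" using m0 bb_pos[of k] by simp
  finally show ?thesis by (simp add: cmod_dd)
qed

lemma cmod_lp_le: "cmod (lp k) \<le> bb k + sqrt (\<mu> k)"
proof -
  have "cmod (lp k) = cmod (- of_real (bb k) + dd k) / 2" by (simp add: lp_def' norm_divide)
  also have "\<dots> \<le> (bb k + cmod (dd k)) / 2"
    using norm_triangle_ineq[of "- of_real (bb k)" "dd k"] bb_pos[of k] by simp
  finally show ?thesis using cmod_dd_le[of k] by simp
qed

lemma cmod_lm_le: "cmod (lm k) \<le> bb k + sqrt (\<mu> k)"
proof -
  have "cmod (lm k) = cmod (- of_real (bb k) - dd k) / 2" by (simp add: lm_def' norm_divide)
  also have "\<dots> \<le> (bb k + cmod (dd k)) / 2"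
    using norm_triangle_ineq4[of "- of_real (bb k)" "dd k"] bb_pos[of k] by simp
  finally show ?thesis using cmod_dd_le[of k] by simp
qed

definition "dl = min \<alpha> (1 - \<alpha>)"
definition "c3 = min (\<rho> / 2) (1 / \<rho>)"

lemma dl_pos: "0 < dl" using alpha by (simp add: dl_def)
lemma c3_pos: "0 < c3" using rho_pos by (simp add: c3_def)

lemma kap_lower:
  assumes "1 \<le> \<mu> k"
  shows "c3 * \<mu> k powr dl \<le> kap k"
proof -
  have m0: "0 < \<mu> k" by (rule mu_pos)
  have p1: "\<mu> k powr dl \<le> \<mu> k powr \<alpha>" using assms by (intro powr_mono) (auto simp: dl_def)
  have p2: "\<mu> k powr dl \<le> \<mu> k powr (1 - \<alpha>)" using assms by (intro powr_mono) (auto simp: dl_def)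
  have q0: "0 \<le> \<mu> k powr dl" by simp
  have "c3 * \<mu> k powr dl \<le> (\<rho> / 2) * \<mu> k powr \<alpha>"
    using p1 q0 rho_pos by (intro mult_mono) (auto simp: c3_def)
  moreover have "c3 * \<mu> k powr dl \<le> (1 / \<rho>) * \<mu> k powr (1 - \<alpha>)"
    using p2 q0 rho_pos by (intro mult_mono) (auto simp: c3_def)
  moreover have "\<mu> k / bb k = (1 / \<rho>) * \<mu> k powr (1 - \<alpha>)"
    using m0 by (simp add: bb_def powr_diff)
  ultimately show ?thesis by (simp add: kap_def bb_def)
qed

lemma Wf_big:
  assumes t: "0 < t" and c0: "0 < c0" and M: "1 \<le> \<mu> k" and D: "c0 * \<mu> k \<le> \<bar>DD k\<bar>"
  shows "Wf t k \<le> ((4 + 2 * \<rho>) * (60 / (t\<^sup>2 * sqrt c0) + 4 / t)) * ((\<mu> k)^2 * exp (- (c3 * t / 2) * \<mu> k powr dl))"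
proof -
  have m0: "0 < \<mu> k" by (rule mu_pos)
  have d0: "0 < cmod (dd k)" using dd_nz[of k] by simp
  have dsq: "sqrt c0 \<le> cmod (dd k)"
  proof -
    have "c0 \<le> \<bar>DD k\<bar>" using D c0 M by (smt (verit) mult_le_cancel_left1)
    then show ?thesis by (simp add: cmod_dd)
  qed
  define Q where "Q = 2 + (cmod (lp k) + cmod (lm k)) / sqrt (\<mu> k)"
  have "Wf t k = \<mu> k powr \<gamma> * Q * exp (- kap k * t / 2) * (60 / (t\<^sup>2 * cmod (dd k)) + 4 / t)"
    unfolding Wf_def PP_def Q_def using d0 by (simp add: field_simps)
  also have "\<dots> \<le> \<mu> k * ((4 + 2 * \<rho>) * \<mu> k) * exp (- (c3 * t / 2) * \<mu> k powr dl) * (60 / (t\<^sup>2 * sqrt c0) + 4 / t)"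
  proof (intro mult_mono)
    show "\<mu> k powr \<gamma> \<le> \<mu> k"
      using M gamma powr_mono[of \<gamma> 1 "\<mu> k"] by simp
    have bq: "bb k / sqrt (\<mu> k) \<le> \<rho> * \<mu> k"
    proof -
      have "bb k \<le> \<rho> * \<mu> k" using M alpha rho_pos powr_mono[of \<alpha> 1 "\<mu> k"] by (simp add: bb_def)
      moreover have "1 \<le> sqrt (\<mu> k)" using M by simp
      ultimately show ?thesis using bb_pos[of k] by (smt (verit) divide_le_eq_1 divide_right_mono mult_pos_pos
            div_by_1 frac_le zero_less_one)
    qed
    have "(cmod (lp k) + cmod (lm k)) / sqrt (\<mu> k) \<le> (2 * bb k + 2 * sqrt (\<mu> k)) / sqrt (\<mu> k)"
      using cmod_lp_le[of k] cmod_lm_le[of k] m0 by (intro divide_right_mono) auto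
    also have "\<dots> = 2 * (bb k / sqrt (\<mu> k)) + 2" using m0 by (simp add: field_simps)
    finally have h1: "(cmod (lp k) + cmod (lm k)) / sqrt (\<mu> k) \<le> 2 * (bb k / sqrt (\<mu> k)) + 2" .
    have h2: "(4 + 2 * \<rho>) * \<mu> k = 4 * \<mu> k + 2 * (\<rho> * \<mu> k)" by (simp add: algebra_simps)
    show "Q \<le> (4 + 2 * \<rho>) * \<mu> k" unfolding Q_def using h1 h2 bq M by linarith
    show "exp (- kap k * t / 2) \<le> exp (- (c3 * t / 2) * \<mu> k powr dl)"
      using kap_lower[OF M] t by (simp add: mult_right_mono)
    show "60 / (t\<^sup>2 * cmod (dd k)) + 4 / t \<le> 60 / (t\<^sup>2 * sqrt c0) + 4 / t"
      using dsq c0 t by (simp add: frac_le)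
  qed (auto simp: Q_def intro!: mult_nonneg_nonneg add_nonneg_nonneg divide_nonneg_nonneg less_imp_le[OF m0] less_imp_le[OF t] less_imp_le[OF rho_pos])
  also have "\<dots> = ((4 + 2 * \<rho>) * (60 / (t\<^sup>2 * sqrt c0) + 4 / t)) * ((\<mu> k)^2 * exp (- (c3 * t / 2) * \<mu> k powr dl))"
    using t c0 by (simp add: power2_eq_square field_simps)
  finally show ?thesis .
qed

lemma Wf_unif:
  assumes mu_lim: "filterlim \<mu> at_top sequentially" and t: "0 < t"
  shows "\<exists>Wt. \<forall>k. Wf t k \<le> Wt"
proof -
  obtain M0 c0 where M0: "1 \<le> M0" and c0: "0 < c0" and D: "\<And>k. M0 \<le> \<mu> k \<Longrightarrow> c0 * \<mu> k \<le> \<bar>DD k\<bar>"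
    using DD_big by blast
  define K where "K = (4 + 2 * \<rho>) * (60 / (t\<^sup>2 * sqrt c0) + 4 / t)"
  define g where "g x = K * (x^2 * exp (- (c3 * t / 2) * x powr dl))" for x
  have "(g \<longlongrightarrow> K * 0) at_top" unfolding g_def
    using c3_pos t dl_pos by (intro tendsto_mult tendsto_const lim0) auto
  then have "((\<lambda>k. g (\<mu> k)) \<longlongrightarrow> 0) sequentially"
    using filterlim_compose[OF _ mu_lim] by simp
  then have ev1: "eventually (\<lambda>k. g (\<mu> k) < 1) sequentially"
    by (rule order_tendstoD) simp
  have ev2: "eventually (\<lambda>k. M0 \<le> \<mu> k) sequentially"
    using mu_lim by (simp add: filterlim_at_top)
  have "eventually (\<lambda>k. Wf t k \<le> 1) sequentially"
    using ev1 ev2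
  proof eventually_elim
    case (elim k)
    have "Wf t k \<le> g (\<mu> k)" unfolding g_def K_def
      using Wf_big[OF t c0 _ D] elim M0 by simp
    then show ?case using elim by simp
  qed
  then obtain N where N: "\<And>k. N \<le> k \<Longrightarrow> Wf t k \<le> 1"
    by (auto simp: eventually_sequentially)
  define Wt where "Wt = max 1 (Max (Wf t ` {..N}))"
  have "Wf t k \<le> Wt" for k
  proof (cases "N \<le> k")
    case True then show ?thesis using N[OF True] by (simp add: Wt_def le_max_iff_disj)
  next
    case False
    then have "Wf t k \<le> Max (Wf t ` {..N})" by (intro Max_ge) auto
    then show ?thesis by (simp add: Wt_def)
  qed
  then show ?thesis by blast
qed

end


context ctl begin

lemma Hnorm_nonneg: "0 \<le> Hnorm (vec n a b)"
proof -
  have "(\<Sum>j. (cmod (fst (vec n a b j)))\<^sup>2 + (cmod (snd (vec n a b j)))\<^sup>2)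
      = (\<Sum>j\<le>n. (cmod (fst (vec n a b j)))\<^sup>2 + (cmod (snd (vec n a b j)))\<^sup>2)"
    by (rule suminf_finite) (auto simp: vec_eq)
  moreover have "0 \<le> (\<Sum>j\<le>n. (cmod (fst (vec n a b j)))\<^sup>2 + (cmod (snd (vec n a b j)))\<^sup>2)"
    by (intro sum_nonneg) auto
  ultimately show ?thesis by (simp add: Hnorm_def)
qed

lemma Hnorm_sq:
  "(Hnorm (vec n a b))\<^sup>2 = (\<Sum>j\<le>n. (cmod (fst (vec n a b j)))\<^sup>2 + (cmod (snd (vec n a b j)))\<^sup>2)"
proof -
  have "(\<Sum>j. (cmod (fst (vec n a b j)))\<^sup>2 + (cmod (snd (vec n a b j)))\<^sup>2)
      = (\<Sum>j\<le>n. (cmod (fst (vec n a b j)))\<^sup>2 + (cmod (snd (vec n a b j)))\<^sup>2)"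
    by (rule suminf_finite) (auto simp: vec_eq)
  moreover have "0 \<le> (\<Sum>j\<le>n. (cmod (fst (vec n a b j)))\<^sup>2 + (cmod (snd (vec n a b j)))\<^sup>2)"
    by (intro sum_nonneg) auto
  ultimately show ?thesis by (simp add: Hnorm_def)
qed

lemma ctrl_meas: "(\<lambda>s. ctrl n t a b s j) \<in> borel_measurable (restrict_space lborel {0..t})"
proof -
  have "continuous_on UNIV (\<lambda>s. ctrl n t a b s j)"
    unfolding ctrl_def by (cases "j \<le> n") (simp_all add: vf_cont)
  then have "(\<lambda>s. ctrl n t a b s j) \<in> borel_measurable lborel"
    using borel_measurable_continuous_onI by simp
  then show ?thesis by (rule measurable_restrict_space1)
qed

lemma L2sq_bound:
  assumes t: "0 < t" and W: "\<And>k. Wf t k \<le> Wt"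
  shows "L2sq t (ctrl n t a b) \<le> ennreal (2 * Wt\<^sup>2 * (Hnorm (vec n a b))\<^sup>2 * t)"
proof -
  let ?h = "vec n a b"
  define S where "S = (\<Sum>j\<le>n. (cmod (fst (?h j)))\<^sup>2 + (cmod (snd (?h j)))\<^sup>2)"
  have Wt0: "0 \<le> Wt" using W[of 0] Wf_nonneg[OF t, of 0] by simp
  have pt: "(\<Sum>j. ennreal ((cmod (ctrl n t a b s j))\<^sup>2)) * indicator {0..t} s
      \<le> ennreal (2 * Wt\<^sup>2 * S) * indicator {0..t} s" for s
  proof (cases "s \<in> {0..t}")
    case False then show ?thesis by simp
  next
    case True
    have "(\<Sum>j. ennreal ((cmod (ctrl n t a b s j))\<^sup>2)) = (\<Sum>j\<le>n. ennreal ((cmod (ctrl n t a b s j))\<^sup>2))"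
      by (rule suminf_finite) (auto simp: ctrl_def)
    also have "\<dots> = ennreal (\<Sum>j\<le>n. (cmod (ctrl n t a b s j))\<^sup>2)"
      by (rule sum_ennreal) simp
    also have "\<dots> \<le> ennreal (2 * Wt\<^sup>2 * S)"
    proof (rule ennreal_leI)
      have "(cmod (ctrl n t a b s j))\<^sup>2 \<le> 2 * Wt\<^sup>2 * ((cmod (fst (?h j)))\<^sup>2 + (cmod (snd (?h j)))\<^sup>2)" for j
      proof -
        let ?x = "cmod (fst (?h j))" and ?y = "cmod (snd (?h j))"
        have "cmod (ctrl n t a b s j) \<le> Wf t j * (?x + ?y)"
          using ctrl_bound[OF t] True by auto
        also have "\<dots> \<le> Wt * (?x + ?y)" using W[of j] by (intro mult_right_mono) auto
        finally have "(cmod (ctrl n t a b s j))\<^sup>2 \<le> (Wt * (?x + ?y))\<^sup>2"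
          by (intro power_mono) auto
        also have "\<dots> = Wt\<^sup>2 * (?x + ?y)\<^sup>2" by (simp add: power_mult_distrib)
        also have "\<dots> \<le> Wt\<^sup>2 * (2 * (?x\<^sup>2 + ?y\<^sup>2))"
        proof (intro mult_left_mono)
          have "0 \<le> (?x - ?y)\<^sup>2" by simp
          then show "(?x + ?y)\<^sup>2 \<le> 2 * (?x\<^sup>2 + ?y\<^sup>2)" by (simp add: power2_eq_square algebra_simps)
        qed simp
        finally show ?thesis by (simp add: algebra_simps)
      qed
      then have "(\<Sum>j\<le>n. (cmod (ctrl n t a b s j))\<^sup>2) \<le> (\<Sum>j\<le>n. 2 * Wt\<^sup>2 * ((cmod (fst (?h j)))\<^sup>2 + (cmod (snd (?h j)))\<^sup>2))"
        by (intro sum_mono)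
      then show "(\<Sum>j\<le>n. (cmod (ctrl n t a b s j))\<^sup>2) \<le> 2 * Wt\<^sup>2 * S"
        by (simp add: S_def sum_distrib_left)
    qed
    finally show ?thesis using True by simp
  qed
  have "L2sq t (ctrl n t a b) \<le> (\<integral>\<^sup>+ s. ennreal (2 * Wt\<^sup>2 * S) * indicator {0..t} s \<partial>lborel)"
    unfolding L2sq_def by (intro nn_integral_mono pt)
  also have "\<dots> = ennreal (2 * Wt\<^sup>2 * S) * ennreal t"
    using t by (simp add: nn_integral_cmult_indicator)
  also have "\<dots> = ennreal (2 * Wt\<^sup>2 * S * t)"
    by (rule ennreal_mult''[symmetric]) (use t in simp)
  finally show ?thesis by (simp add: S_def Hnorm_sq)
qed

lemma ctrl_L2:
  assumes t: "0 < t" and W: "\<And>k. Wf t k \<le> Wt"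
  shows "ctrl n t a b \<in> L2ctrl t"
    and "L2norm t (ctrl n t a b) \<le> Wt * Hnorm (vec n a b) * sqrt (2 * t)"
proof -
  have Wt0: "0 \<le> Wt" using W[of 0] Wf_nonneg[OF t, of 0] by simp
  have B: "L2sq t (ctrl n t a b) \<le> ennreal (2 * Wt\<^sup>2 * (Hnorm (vec n a b))\<^sup>2 * t)"
    by (rule L2sq_bound[OF t W])
  then have "L2sq t (ctrl n t a b) < \<infinity>" using le_less_trans[OF B ennreal_less_top] by simp
  then show "ctrl n t a b \<in> L2ctrl t" using ctrl_meas by (simp add: L2ctrl_def)
  have "enn2real (L2sq t (ctrl n t a b)) \<le> 2 * Wt\<^sup>2 * (Hnorm (vec n a b))\<^sup>2 * t"
    using B t by (intro enn2real_leI) auto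
  then have "L2norm t (ctrl n t a b) \<le> sqrt (2 * Wt\<^sup>2 * (Hnorm (vec n a b))\<^sup>2 * t)"
    unfolding L2norm_def by (rule real_sqrt_le_mono)
  also have "\<dots> = Wt * Hnorm (vec n a b) * sqrt (2 * t)"
  proof -
    have H0: "0 \<le> Hnorm (vec n a b)" by (rule Hnorm_nonneg)
    have "2 * Wt\<^sup>2 * (Hnorm (vec n a b))\<^sup>2 * t = (Wt * Hnorm (vec n a b))\<^sup>2 * (2 * t)"
      by (simp add: power_mult_distrib)
    then have "sqrt (2 * Wt\<^sup>2 * (Hnorm (vec n a b))\<^sup>2 * t) = sqrt ((Wt * Hnorm (vec n a b))\<^sup>2) * sqrt (2 * t)"
      by (simp only: real_sqrt_mult)
    also have "sqrt ((Wt * Hnorm (vec n a b))\<^sup>2) = Wt * Hnorm (vec n a b)"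
      using Wt0 H0 by simp
    finally show ?thesis .
  qed
  finally show "L2norm t (ctrl n t a b) \<le> Wt * Hnorm (vec n a b) * sqrt (2 * t)" .
qed

end


theorem theorem5p4:
  fixes \<mu> :: "nat \<Rightarrow> real" and \<rho> \<alpha> \<gamma> :: real
  assumes mu_pos: "\<forall>k. 0 < \<mu> k"
    and mu_mono: "mono \<mu>"
    and mu_lim: "filterlim \<mu> at_top sequentially"
    and rho_pos: "0 < \<rho>"
    and alpha: "1/2 \<le> \<alpha>" "\<alpha> < 1"
    and gamma: "0 \<le> \<gamma>" "\<gamma> < 1/2"
    and nondeg: "\<forall>k. \<rho>\<^sup>2 \<noteq> 4 * \<mu> k powr (1 - 2 * \<alpha>)"
  shows "(\<forall>n t h. 0 < t \<longrightarrow> h \<in> Hn \<mu> \<rho> \<alpha> n \<longrightarrow>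
            (\<exists>u \<in> L2ctrl t. Ysol \<mu> \<rho> \<alpha> \<gamma> n h u t = (\<lambda>j. (0, 0))))
       \<and> (\<forall>t > 0. \<exists>c > 0. \<forall>n. \<forall>h \<in> Hn \<mu> \<rho> \<alpha> n.
            Energy \<mu> \<rho> \<alpha> \<gamma> n t h
              \<le> c * Hnorm h * t powr (- 1/2 - (\<gamma> + \<alpha> - 1/2) / (1 - \<alpha>)))"
proof -
  interpret C: ctl \<mu> \<rho> \<alpha> \<gamma>
    using mu_pos rho_pos alpha gamma nondeg by unfold_locales auto
  have P1: "\<exists>u \<in> L2ctrl t. Ysol \<mu> \<rho> \<alpha> \<gamma> n h u t = (\<lambda>j. (0, 0))"
    if t: "0 < t" and h: "h \<in> Hn \<mu> \<rho> \<alpha> n" for n t h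
  proof -
    obtain a b where hv: "h = C.vec n a b" using h C.Hn_iff by blast
    obtain Wt where W: "\<And>k. C.Wf t k \<le> Wt" using C.Wf_unif[OF mu_lim t] by blast
    show ?thesis
      using C.ctrl_L2(1)[OF t W] C.Ysol_zero[OF t] unfolding hv by blast
  qed
  have P2: "\<exists>c > 0. \<forall>n. \<forall>h \<in> Hn \<mu> \<rho> \<alpha> n.
            Energy \<mu> \<rho> \<alpha> \<gamma> n t h
              \<le> c * Hnorm h * t powr (- 1/2 - (\<gamma> + \<alpha> - 1/2) / (1 - \<alpha>))"
    if t: "0 < t" for t
  proof -
    let ?r = "- 1/2 - (\<gamma> + \<alpha> - 1/2) / (1 - \<alpha>)"
    obtain Wt where W: "\<And>k. C.Wf t k \<le> Wt" using C.Wf_unif[OF mu_lim t] by blast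
    have Wt0: "0 \<le> Wt" using W[of 0] C.Wf_nonneg[OF t, of 0] by simp
    define c where "c = Wt * sqrt (2 * t) / t powr ?r + 1"
    have tr: "0 < t powr ?r" using t by simp
    have c0: "0 < c" unfolding c_def using Wt0 t tr by (simp add: add_nonneg_pos)
    have "Energy \<mu> \<rho> \<alpha> \<gamma> n t h \<le> c * Hnorm h * t powr ?r" if h: "h \<in> Hn \<mu> \<rho> \<alpha> n" for n h
    proof -
      obtain a b where hv: "h = C.vec n a b" using h C.Hn_iff by blast
      let ?S = "{u \<in> L2ctrl t. Ysol \<mu> \<rho> \<alpha> \<gamma> n h u t = (\<lambda>j. (0, 0))}"
      have mem: "C.ctrl n t a b \<in> ?S"
        using C.ctrl_L2(1)[OF t W] C.Ysol_zero[OF t] unfolding hv by blast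
      have bdd: "bdd_below (L2norm t ` ?S)"
        by (rule bdd_belowI[of _ 0]) (auto simp: L2norm_def)
      have "Energy \<mu> \<rho> \<alpha> \<gamma> n t h \<le> L2norm t (C.ctrl n t a b)"
        unfolding Energy_def by (rule cInf_lower[OF imageI[OF mem] bdd])
      also have "\<dots> \<le> Wt * Hnorm h * sqrt (2 * t)"
        using C.ctrl_L2(2)[OF t W] unfolding hv .
      also have "\<dots> \<le> c * Hnorm h * t powr ?r"
      proof -
        have H0: "0 \<le> Hnorm h" unfolding hv by (rule C.Hnorm_nonneg)
        have "c * Hnorm h * t powr ?r = Wt * sqrt (2 * t) * Hnorm h + Hnorm h * t powr ?r"
          unfolding c_def using tr by (simp add: field_simps)
        moreover have "0 \<le> Hnorm h * t powr ?r" using H0 tr by simp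
        ultimately show ?thesis by (simp add: algebra_simps)
      qed
      finally show ?thesis .
    qed
    then show ?thesis using c0 by blast
  qed
  show ?thesis using P1 P2 by blast
qed

end
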